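(* Let $(x_n)_{n\ge0}$ be an infinite path in $\Gamma$ with $\ell(x_n)=n$, let $z$ be nonreal, and let $v_z,u_z:\Gamma\to\mathbb C$ satisfy $v_z(x_0)=1$, $v_z(x_1)=(z-\beta_{x_0})/\lambda_{x_0}$, $u_z(x_0)=0$, $u_z(x_1)=1/\lambda_{x_0}$, and $(Jv_z)(x)=zv_z(x)$, $(Ju_z)(x)=zu_z(x)$ for all $x\in\Gamma\setminus\{x_0\}$. Then for every $n\ge0$, $$v_z(x_n)u_z(x_{n+1})-u_z(x_n)v_z(x_{n+1})=\frac{1}{\lambda_{x_n}}.$$
   Context: Let $\Gamma$ be an infinite connected tree whose vertices are arranged in levels $\ell(x)\in\{0,1,2,\dots\}$: every vertex $x$ is adjacent to exactly one vertex $x'$ with $\ell(x')=\ell(x)+1$; for $\ell(x)\ge 1$ the set $N_x=\{y:\ y'=x\}$ of neighbours of $x$ on level $\ell(x)-1$ is finite and nonempty; $N_x=\emptyset$ if $\ell(x)=0$; there are no other edges. Fix $\lambda_x>0$, $\beta_x\in\mathbb R$. The Jacobi matrix $J$ acts on functions $v:\Gamma\to\mathbb C$ by $(Jv)(x)=\lambda_x v(x')+\beta_x v(x)+\sum_{y\in N_x}\lambda_y v(y)$. *)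

theory Defs
  imports Complex_Main
begin

text \<open>A levelled tree: the vertex set is the type 'v; lev x is the level of x and
 par x is the unique neighbour x' of x on level lev x + 1.\<close>

definition children :: "('v \<Rightarrow> 'v) \<Rightarrow> 'v \<Rightarrow> 'v set" where
  "children par x = {y. par y = x}"

definition adjacent :: "('v \<Rightarrow> 'v) \<Rightarrow> 'v \<Rightarrow> 'v \<Rightarrow> bool" where
  "adjacent par x y \<longleftrightarrow> par x = y \<or> par y = x"

definition level_tree :: "('v \<Rightarrow> nat) \<Rightarrow> ('v \<Rightarrow> 'v) \<Rightarrow> bool" where
  "level_tree lev par \<longleftrightarrow>
     infinite (UNIV :: 'v set) \<and>
     (\<forall>x. lev (par x) = lev x + 1) \<and>
     (\<forall>x. lev x \<ge> 1 \<longrightarrow> finite (children par x) \<and> children par x \<noteq> {}) \<and>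
     (\<forall>x. lev x = 0 \<longrightarrow> children par x = {}) \<and>
     (\<forall>x y. \<exists>m k. (par ^^ m) x = (par ^^ k) y)"

definition jacobi :: "('v \<Rightarrow> 'v) \<Rightarrow> ('v \<Rightarrow> real) \<Rightarrow> ('v \<Rightarrow> real) \<Rightarrow> ('v \<Rightarrow> complex) \<Rightarrow> 'v \<Rightarrow> complex" where
  "jacobi par lam beta v x =
     of_real (lam x) * v (par x) + of_real (beta x) * v x
     + (\<Sum>y\<in>children par x. of_real (lam y) * v y)"

end

theory Submission
  imports Defs
begin

lemma alg:
  fixes a b z vp vw Sv up uw Su :: complex
  assumes "a*vp + b*vw + Sv = z*vw" "a*up + b*uw + Su = z*uw"
  shows "a*(vw*up - uw*vp) = uw*Sv - vw*Su"
proof -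
  have "vw*(a*up + b*uw + Su) - uw*(a*vp + b*vw + Sv) = vw*(z*uw) - uw*(z*vw)"
    using assms by simp
  thus ?thesis by (simp add: algebra_simps)
qed

lemma jac_W:
  assumes "jacobi par lam beta v x = z * v x" "jacobi par lam beta u x = z * u x"
  shows "of_real (lam x) * (v x * u (par x) - u x * v (par x))
     = (\<Sum>c\<in>children par x. of_real (lam c) * (u x * v c - v x * u c))"
proof -
  have "of_real (lam x) * (v x * u (par x) - u x * v (par x))
     = u x * (\<Sum>y\<in>children par x. of_real (lam y) * v y) - v x * (\<Sum>y\<in>children par x. of_real (lam y) * u y)"
    by (rule alg[where b="of_real (beta x)" and z=z]) (use assms in \<open>simp_all add: jacobi_def\<close>)
  also have "\<dots> = (\<Sum>c\<in>children par x. of_real (lam c) * (u x * v c - v x * u c))"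
    by (simp add: sum_distrib_left sum_subtractf[symmetric] algebra_simps)
  finally show ?thesis .
qed

theorem proposition4:
  fixes lev :: "'v \<Rightarrow> nat" and par :: "'v \<Rightarrow> 'v"
    and lam beta :: "'v \<Rightarrow> real" and xs :: "nat \<Rightarrow> 'v"
    and z :: complex and v u :: "'v \<Rightarrow> complex"
  assumes tree: "level_tree lev par"
    and lam_pos: "\<And>x. lam x > 0"
    and path: "\<And>n. adjacent par (xs n) (xs (Suc n))"
    and path_lev: "\<And>n. lev (xs n) = n"
    and nonreal: "Im z \<noteq> 0"
    and v0: "v (xs 0) = 1"
    and v1: "v (xs 1) = (z - of_real (beta (xs 0))) / of_real (lam (xs 0))"
    and u0: "u (xs 0) = 0"
    and u1: "u (xs 1) = 1 / of_real (lam (xs 0))"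
    and v_eq: "\<And>x. x \<noteq> xs 0 \<Longrightarrow> jacobi par lam beta v x = z * v x"
    and u_eq: "\<And>x. x \<noteq> xs 0 \<Longrightarrow> jacobi par lam beta u x = z * u x"
  shows "\<forall>n. v (xs n) * u (xs (Suc n)) - u (xs n) * v (xs (Suc n)) = 1 / of_real (lam (xs n))"
proof -
  have levp: "\<And>x. lev (par x) = lev x + 1" using tree unfolding level_tree_def by blast
  have fin: "\<And>x. lev x \<ge> 1 \<Longrightarrow> finite (children par x)" using tree unfolding level_tree_def by blast
  have emp: "\<And>x. lev x = 0 \<Longrightarrow> children par x = {}" using tree unfolding level_tree_def by blast
  have parxs: "\<And>n. par (xs n) = xs (Suc n)"
  proof -
    fix n
    have "par (xs n) = xs (Suc n) \<or> par (xs (Suc n)) = xs n" using path[of n] by (simp add: adjacent_def)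
    moreover have "par (xs (Suc n)) \<noteq> xs n"
    proof
      assume "par (xs (Suc n)) = xs n"
      hence "lev (xs n) = Suc n + 1" using levp[of "xs (Suc n)"] path_lev by simp
      thus False using path_lev by simp
    qed
    ultimately show "par (xs n) = xs (Suc n)" by blast
  qed
  have pk: "\<And>k. (par ^^ k) (xs 0) = xs k"
  proof -
    fix k show "(par ^^ k) (xs 0) = xs k" by (induction k) (simp_all add: parxs)
  qed
  define anc where "anc w \<longleftrightarrow> (\<exists>k. w = xs k)" for w
  have key: "\<And>w. lev w = m \<Longrightarrow> \<not> anc w \<Longrightarrow> v w * u (par w) - u w * v (par w) = 0" for m
  proof (induction m rule: less_induct)
    case (less m)
    have ne: "w \<noteq> xs 0" using less.prems anc_def by blast
    have "of_real (lam w) * (v w * u (par w) - u w * v (par w))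
        = (\<Sum>c\<in>children par w. of_real (lam c) * (u w * v c - v w * u c))"
      by (rule jac_W) (use ne v_eq u_eq in auto)
    also have "\<dots> = 0"
    proof (rule sum.neutral, rule ballI)
      fix c assume c: "c \<in> children par w"
      hence pc: "par c = w" by (simp add: children_def)
      have "\<not> anc c"
      proof
        assume "anc c" then obtain k where "c = xs k" by (auto simp: anc_def)
        hence "w = xs (Suc k)" using pc parxs by simp
        thus False using less.prems anc_def by blast
      qed
      moreover have "lev c < m" using levp[of c] pc less.prems by simp
      ultimately have "v c * u (par c) - u c * v (par c) = 0" using less.IH by blast
      hence "u w * v c - v w * u c = 0" using pc by (simp add: algebra_simps)
      thus "of_real (lam c) * (u w * v c - v w * u c) = 0" by simp
    qed
    finally show ?case using lam_pos[of w] by simp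
  qed
  have W: "of_real (lam (xs n)) * (v (xs n) * u (xs (Suc n)) - u (xs n) * v (xs (Suc n))) = 1" for n
  proof (induction n)
    case 0
    show ?case using v0 u0 u1 lam_pos[of "xs 0"] by simp
  next
    case (Suc n)
    let ?x = "xs (Suc n)"
    have ne: "?x \<noteq> xs 0" using path_lev[of "Suc n"] path_lev[of 0] by auto
    have "of_real (lam ?x) * (v ?x * u (xs (Suc (Suc n))) - u ?x * v (xs (Suc (Suc n))))
        = (\<Sum>c\<in>children par ?x. of_real (lam c) * (u ?x * v c - v ?x * u c))"
      using jac_W[of par lam beta v ?x z u] ne v_eq u_eq parxs by auto
    also have "\<dots> = of_real (lam (xs n)) * (u ?x * v (xs n) - v ?x * u (xs n))
        + (\<Sum>c\<in>children par ?x - {xs n}. of_real (lam c) * (u ?x * v c - v ?x * u c))"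
    proof (rule sum.remove)
      show "finite (children par ?x)" using fin path_lev by simp
      show "xs n \<in> children par ?x" using parxs by (simp add: children_def)
    qed
    also have "(\<Sum>c\<in>children par ?x - {xs n}. of_real (lam c) * (u ?x * v c - v ?x * u c)) = 0"
    proof (rule sum.neutral, rule ballI)
      fix c assume c: "c \<in> children par ?x - {xs n}"
      hence pc: "par c = ?x" and cn: "c \<noteq> xs n" by (auto simp: children_def)
      have "\<not> anc c"
      proof
        assume "anc c" then obtain k where k: "c = xs k" by (auto simp: anc_def)
        have "lev (par c) = k + 1" using levp[of c] k path_lev by simp
        hence "k = n" using pc path_lev by simp
        thus False using k cn by simp
      qed
      hence "v c * u (par c) - u c * v (par c) = 0" using key by blast
      hence "u ?x * v c - v ?x * u c = 0" using pc by (simp add: algebra_simps)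
      thus "of_real (lam c) * (u ?x * v c - v ?x * u c) = 0" by simp
    qed
    also have "of_real (lam (xs n)) * (u ?x * v (xs n) - v ?x * u (xs n)) = 1"
      using Suc.IH by (simp add: algebra_simps)
    finally show ?case by simp
  qed
  show ?thesis
  proof
    fix n
    have "lam (xs n) \<noteq> 0" using lam_pos[of "xs n"] by simp
    thus "v (xs n) * u (xs (Suc n)) - u (xs n) * v (xs (Suc n)) = 1 / of_real (lam (xs n))"
      using W[of n] by (simp add: field_simps)
  qed
qed

end
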